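(* Under the setting of the following data: $m\ge1$, $\tau>0$, symmetric $\Sigma_z\succ0$ in $\mathbb{R}^{m\times m}$, $M\in\mathbb{R}^{m\times N}$ of full row rank, block-diagonal $D^{(\ell)}=\mathrm{diag}_{j\in\mathcal{N}_i}[\Sigma^{(\ell)}_{\alpha_j}]$, $\ell\in\{a,b\}$, with symmetric blocks satisfying $\Sigma^{(a)}_{\alpha_j}\succ\Sigma^{(b)}_{\alpha_j}\succ0$ for all $j$, $\Sigma_p^{(\ell)}=MD^{(\ell)}M^T$ each commuting with $\Sigma_z^{-1}$, and $P_f^{u(\ell)}=\mathbb{P}\big((z^{(\ell)})^T\Sigma_z^{-1}z^{(\ell)}>\tau\big)$ for $z^{(\ell)}\sim\mathcal{N}(0,\Sigma_z+\Sigma_p^{(\ell)})$, it holds that $P_f^{u(a)}>P_f^{u(b)}$.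
   Context: $X\succ Y$ means $X-Y$ is positive definite. In the paper $M=C_iE_i$ and $P_f^{u(\ell)}$ is the false-alarm probability of subsystem $i$'s detector that ignores the neighbors' privacy-noise covariances $\Sigma^{(\ell)}_{\alpha_j}$. *)

theory Defs
  imports "HOL-Analysis.Analysis"
begin

text \<open>Positive definiteness (no symmetry built in; symmetry is assumed separately).\<close>
definition pos_def :: "real^'n^'n \<Rightarrow> bool" where
  "pos_def A \<longleftrightarrow> (\<forall>x::real^'n. x \<noteq> 0 \<longrightarrow> x \<bullet> (A *v x) > 0)"

text \<open>Loewner strict order: X \<succ> Y iff X - Y is positive definite.\<close>
definition succ_mat :: "real^'n^'n \<Rightarrow> real^'n^'n \<Rightarrow> bool" where
  "succ_mat X Y \<longleftrightarrow> pos_def (X - Y)"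

definition symmetric_mat :: "real^'n^'n \<Rightarrow> bool" where
  "symmetric_mat A \<longleftrightarrow> transpose A = A"

text \<open>Block structure: coordinate p of R^N belongs to block blk p (a neighbour j).
  D is block diagonal iff entries between different blocks vanish.\<close>
definition block_diag :: "('n \<Rightarrow> 'k) \<Rightarrow> real^'n^'n \<Rightarrow> bool" where
  "block_diag blk D \<longleftrightarrow> (\<forall>p q. blk p \<noteq> blk q \<longrightarrow> D $ p $ q = 0)"

text \<open>The j-th diagonal block of D is symmetric.\<close>
definition block_symmetric :: "('n \<Rightarrow> 'k) \<Rightarrow> 'k \<Rightarrow> real^'n^'n \<Rightarrow> bool" where
  "block_symmetric blk j D \<longleftrightarrow> (\<forall>p q. blk p = j \<longrightarrow> blk q = j \<longrightarrow> D $ p $ q = D $ q $ p)"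

text \<open>The j-th diagonal block of A is positive definite (quadratic form on vectors
  supported in block j).\<close>
definition block_pos_def :: "('n \<Rightarrow> 'k) \<Rightarrow> 'k \<Rightarrow> real^'n^'n \<Rightarrow> bool" where
  "block_pos_def blk j A \<longleftrightarrow>
     (\<forall>x::real^'n. x \<noteq> 0 \<longrightarrow> (\<forall>p. blk p \<noteq> j \<longrightarrow> x $ p = 0) \<longrightarrow> x \<bullet> (A *v x) > 0)"

text \<open>Density of the centered Gaussian N(0,S) on R^m.\<close>
definition gaussian_density :: "real^'m^'m \<Rightarrow> real^'m \<Rightarrow> real" where
  "gaussian_density S x =
     exp (- (x \<bullet> (matrix_inv S *v x)) / 2) / sqrt ((2 * pi) ^ CARD('m) * det S)"

definition gaussian_measure :: "real^'m^'m \<Rightarrow> (real^'m) measure" where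
  "gaussian_measure S = density lborel (\<lambda>x. ennreal (gaussian_density S x))"

text \<open>Unaware false-alarm probability: P(z^T Sz^{-1} z > tau), z ~ N(0, Sz + Sp).\<close>
definition false_alarm_unaware :: "real^'m^'m \<Rightarrow> real^'m^'m \<Rightarrow> real \<Rightarrow> real" where
  "false_alarm_unaware Sz Sp \<tau> =
     measure (gaussian_measure (Sz + Sp)) {z. z \<bullet> (matrix_inv Sz *v z) > \<tau>}"

end

theory Submission
  imports Defs "HOL-Probability.Probability"
begin



lemma matrix_inv_props:
  fixes A :: "'a::semiring_1^'n^'m"
  assumes "invertible A"
  shows "A ** matrix_inv A = mat 1" "matrix_inv A ** A = mat 1"
  using someI_ex[OF assms[unfolded invertible_def]] unfolding matrix_inv_def by auto

lemma matrix_inv_unique: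
  fixes A :: "'a::comm_semiring_1^'n^'n"
  assumes "A ** B = mat 1" "B ** A = mat 1"
  shows "matrix_inv A = B"
proof -
  have inv: "invertible A" using assms invertible_def by blast
  have "matrix_inv A = matrix_inv A ** (A ** B)" by (simp add: assms)
  also have "\<dots> = B" by (simp add: matrix_mul_assoc matrix_inv_props[OF inv])
  finally show ?thesis .
qed

lemma det_shear_finite:
  fixes m n :: "'n::finite"
  assumes "m \<noteq> n"
  shows "det (matrix (\<lambda>v::real^'n. \<chi> i. if i = m then v $ m + v $ n else v $ i)) = 1"
proof -
  let ?h = "\<lambda>v::real^'n. \<chi> i. if i = m then v $ m + v $ n else v $ i"
  have "matrix ?h = (\<chi> k. if k = m then row m (mat 1) + 1 *s row n (mat 1) else row k (mat 1))"
    by (auto simp: matrix_def row_def mat_def axis_def vec_eq_iff)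
  then show ?thesis using det_row_operation[OF assms, of "mat 1" 1] by simp
qed

proposition
 fixes f :: "real^'n::finite \<Rightarrow> real^'n"
  assumes "linear f" "S \<in> lmeasurable"
  shows measurable_linear_image_fin: "(f ` S) \<in> lmeasurable"
    and measure_linear_image_fin: "measure lebesgue (f ` S) = \<bar>det (matrix f)\<bar> * measure lebesgue S" (is "?Q f S")
proof -
  have "\<forall>S \<in> lmeasurable. (f ` S) \<in> lmeasurable \<and> ?Q f S"
  proof (rule induct_linear_elementary [OF \<open>linear f\<close>]; intro ballI)
    fix f g and S :: "(real,'n) vec set"
    assume "linear f" and "linear g"
      and f [rule_format]: "\<forall>S \<in> lmeasurable. f ` S \<in> lmeasurable \<and> ?Q f S"
      and g [rule_format]: "\<forall>S \<in> lmeasurable. g ` S \<in> lmeasurable \<and> ?Q g S"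
      and S: "S \<in> lmeasurable"
    then have gS: "g ` S \<in> lmeasurable"
      by blast
    show "(f \<circ> g) ` S \<in> lmeasurable \<and> ?Q (f \<circ> g) S"
      using f [OF gS] g [OF S] matrix_compose [OF \<open>linear g\<close> \<open>linear f\<close>]
      by (simp add: o_def image_comp abs_mult det_mul)
  next
    fix f :: "real^'n::_ \<Rightarrow> real^'n::_" and i and S :: "(real^'n::_) set"
    assume "linear f" and 0: "\<And>x. f x $ i = 0" and "S \<in> lmeasurable"
    then have "\<not> inj f"
      by (metis (full_types) linear_injective_imp_surjective one_neq_zero surjE vec_component)
    have detf: "det (matrix f) = 0"
      using \<open>\<not> inj f\<close> det_nz_iff_inj[OF \<open>linear f\<close>] by blast
    show "f ` S \<in> lmeasurable \<and> ?Q f S"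
    proof
      show "f ` S \<in> lmeasurable"
        using lmeasurable_iff_indicator_has_integral \<open>linear f\<close> \<open>\<not> inj f\<close> negligible_UNIV negligible_linear_singular_image by blast
      have "measure lebesgue (f ` S) = 0"
        by (meson \<open>\<not> inj f\<close> \<open>linear f\<close> negligible_imp_measure0 negligible_linear_singular_image)
      also have "\<dots> = \<bar>det (matrix f)\<bar> * measure lebesgue S"
        by (simp add: detf)
      finally show "?Q f S" .
    qed
  next
    fix c and S :: "(real^'n::_) set"
    assume "S \<in> lmeasurable"
    show "(\<lambda>a. \<chi> i. c i * a $ i) ` S \<in> lmeasurable \<and> ?Q (\<lambda>a. \<chi> i. c i * a $ i) S"
    proof
      show "(\<lambda>a. \<chi> i. c i * a $ i) ` S \<in> lmeasurable"
        by (simp add: \<open>S \<in> lmeasurable\<close> measurable_stretch)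
      show "?Q (\<lambda>a. \<chi> i. c i * a $ i) S"
        by (simp add: measure_stretch [OF \<open>S \<in> lmeasurable\<close>, of c] axis_def matrix_def det_diagonal)
    qed
  next
    fix m :: "'n" and n :: "'n" and S :: "(real, 'n) vec set"
    assume "m \<noteq> n" and "S \<in> lmeasurable"
    let ?h = "\<lambda>v::(real, 'n) vec. \<chi> i. v $ Transposition.transpose m n i"
    have lin: "linear ?h"
      by (rule linearI) (simp_all add: plus_vec_def scaleR_vec_def)
    have meq: "measure lebesgue ((\<lambda>v::(real, 'n) vec. \<chi> i. v $ Transposition.transpose m n i) ` cbox a b)
             = measure lebesgue (cbox a b)" for a b
    proof (cases "cbox a b = {}")
      case True then show ?thesis
        by simp
    next
      case False
      then have him: "?h ` (cbox a b) \<noteq> {}"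
        by blast
      have eq: "?h ` (cbox a b) = cbox (?h a) (?h b)"
        by (auto simp: image_iff lambda_swap_Galois mem_box_cart) (metis transpose_involutory)+
      show ?thesis
        using him prod.permute [OF permutes_swap_id, where S=UNIV and g="\<lambda>i. (b - a)$i", symmetric]
        by (simp add: eq content_cbox_cart False)
    qed
    have "(\<chi> i j. if Transposition.transpose m n i = j then 1 else 0) = (\<chi> i j. if j = Transposition.transpose m n i then 1 else (0::real))"
      by (auto intro!: Cart_lambda_cong)
    then have "matrix ?h = transpose(\<chi> i j. mat 1 $ i $ Transposition.transpose m n j)"
      by (auto simp: matrix_eq transpose_def axis_def mat_def matrix_def)
    then have 1: "\<bar>det (matrix ?h)\<bar> = 1"
      by (simp add: det_permute_columns permutes_swap_id sign_swap_id abs_mult)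
    show "?h ` S \<in> lmeasurable \<and> ?Q ?h S"
      using measure_linear_sufficient [OF lin \<open>S \<in> lmeasurable\<close>] meq 1 by force
  next
    fix m n :: "'n" and S :: "(real, 'n) vec set"
    assume "m \<noteq> n" and "S \<in> lmeasurable"
    let ?h = "\<lambda>v::(real, 'n) vec. \<chi> i. if i = m then v $ m + v $ n else v $ i"
    have lin: "linear ?h"
      by (rule linearI) (auto simp: algebra_simps plus_vec_def scaleR_vec_def vec_eq_iff)
    have 1: "det(matrix ?h) = 1" using det_shear_finite[OF \<open>m \<noteq> n\<close>] .
    have meq: "measure lebesgue (?h ` (cbox a b)) = measure lebesgue (cbox a b)" for a b
    proof (cases "cbox a b = {}")
      case True then show ?thesis by simp
    next
      case False
      then have ne: "(+) (\<chi> i. if i = n then - a $ n else 0) ` cbox a b \<noteq> {}"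
        by auto
      let ?v = "\<chi> i. if i = n then - a $ n else 0"
      have "?h ` cbox a b
            = (+) (\<chi> i. if i = m \<or> i = n then a $ n else 0) ` ?h ` (+) ?v ` (cbox a b)"
        using \<open>m \<noteq> n\<close> unfolding image_comp o_def by (force simp: vec_eq_iff)
      then have "measure lebesgue (?h ` (cbox a b))
               = measure lebesgue ((\<lambda>v. \<chi> i. if i = m then v $ m + v $ n else v $ i) `
                                   (+) ?v ` cbox a b)"
        by (rule ssubst) (rule measure_translation)
      also have "\<dots> = measure lebesgue ((\<lambda>v. \<chi> i. if i = m then v $ m + v $ n else v $ i) ` cbox (?v +a) (?v + b))"
        by (metis (no_types, lifting) cbox_translation)
      also have "\<dots> = measure lebesgue ((+) ?v ` cbox a b)"
        apply (subst measure_shear_interval)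
        using \<open>m \<noteq> n\<close> ne apply auto
        apply (simp add: cbox_translation)
        by (metis cbox_borel cbox_translation measure_completion sets_lborel)
      also have "\<dots> = measure lebesgue (cbox a b)"
        by (rule measure_translation)
        finally show ?thesis .
      qed
    show "?h ` S \<in> lmeasurable \<and> ?Q ?h S"
      using measure_linear_sufficient [OF lin \<open>S \<in> lmeasurable\<close>] meq 1 by force
  qed
  with assms show "(f ` S) \<in> lmeasurable" "?Q f S"
    by metis+
qed

lemma lborel_linear_density:
  fixes L :: "real^'n^'n"
  assumes inv: "invertible L"
  shows "lborel = density (distr lborel borel ((*v) L)) (\<lambda>_. ennreal \<bar>det L\<bar>)"
proof (rule lborel_eqI)
  let ?Li = "matrix_inv L"
  have LLi: "L ** ?Li = mat 1" and LiL: "?Li ** L = mat 1"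
    using matrix_inv_props[OF inv] by auto
  have pre: "(*v) L -` X = (*v) ?Li ` X" for X
  proof (auto simp: image_iff)
    fix x assume "L *v x \<in> X"
    then show "\<exists>y\<in>X. x = ?Li *v y"
      by (intro bexI[of _ "L *v x"]) (auto simp: matrix_vector_mul_assoc LiL)
  next
    fix y assume "y \<in> X" then show "L *v (?Li *v y) \<in> X"
      by (auto simp: matrix_vector_mul_assoc LLi)
  qed
  have dd: "\<bar>det L\<bar> * \<bar>det ?Li\<bar> = 1"
    using arg_cong[OF LLi, of det] by (simp add: det_mul abs_mult[symmetric])
  have meas[measurable]: "(*v) L \<in> borel_measurable borel"
    by (intro borel_measurable_continuous_onI continuous_intros) 
  fix l u :: "real^'n" assume le: "\<And>b. b \<in> Basis \<Longrightarrow> l \<bullet> b \<le> u \<bullet> b"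
  have box_meas: "box l u \<in> lmeasurable" by simp
  have im: "(*v) ?Li ` box l u \<in> lmeasurable"
    "measure lebesgue ((*v) ?Li ` box l u) = \<bar>det ?Li\<bar> * measure lebesgue (box l u)"
    using measurable_linear_image_fin[OF _ box_meas, of "(*v) ?Li"] measure_linear_image_fin[OF _ box_meas, of "(*v) ?Li"]
    by (auto simp: matrix_vector_mul_linear)
  have sb: "(*v) ?Li ` box l u \<in> sets lborel"
    unfolding pre[symmetric] using measurable_sets[OF meas, of "box l u"] by simp
  have "emeasure lborel ((*v) ?Li ` box l u) = emeasure lebesgue ((*v) ?Li ` box l u)"
    using sb by (simp add: emeasure_completion)
  also have "\<dots> = ennreal (\<bar>det ?Li\<bar> * measure lebesgue (box l u))"
    using im by (simp add: emeasure_eq_measure2)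
  finally have e1: "emeasure lborel ((*v) ?Li ` box l u) = ennreal (\<bar>det ?Li\<bar> * measure lebesgue (box l u))" .
  have "emeasure (density (distr lborel borel ((*v) L)) (\<lambda>_. ennreal \<bar>det L\<bar>)) (box l u)
      = ennreal \<bar>det L\<bar> * emeasure lborel ((*v) L -` box l u)"
    by (simp add: emeasure_density emeasure_distr nn_integral_cmult_indicator)
  also have "\<dots> = ennreal (measure lebesgue (box l u))"
    using e1 dd by (simp add: pre ennreal_mult'[symmetric] mult.assoc[symmetric])
  also have "\<dots> = emeasure lborel (box l u)"
    by (simp add: emeasure_eq_measure2 emeasure_completion)
  also have "\<dots> = (\<Prod>b\<in>Basis. (u - l) \<bullet> b)"
    using le by (simp add: emeasure_lborel_box_eq)
  finally show "emeasure (density (distr lborel borel ((*v) L)) (\<lambda>_. ennreal \<bar>det L\<bar>)) (box l u) = (\<Prod>b\<in>Basis. (u - l) \<bullet> b)" .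
qed simp

lemma nn_integral_linear_cv:
  fixes L :: "real^'n^'n"
  assumes inv: "invertible L" and h[measurable]: "h \<in> borel_measurable borel"
  shows "(\<integral>\<^sup>+x. h x \<partial>lborel) = (\<integral>\<^sup>+u. ennreal \<bar>det L\<bar> * h (L *v u) \<partial>lborel)"
proof -
  have meas[measurable]: "(*v) L \<in> borel_measurable borel"
    by (intro borel_measurable_continuous_onI continuous_intros) 
  have "(\<integral>\<^sup>+x. h x \<partial>lborel) = (\<integral>\<^sup>+x. h x \<partial>density (distr lborel borel ((*v) L)) (\<lambda>_. ennreal \<bar>det L\<bar>))"
    using lborel_linear_density[OF inv] by simp
  also have "\<dots> = (\<integral>\<^sup>+x. ennreal \<bar>det L\<bar> * h x \<partial>distr lborel borel ((*v) L))"
    by (simp add: nn_integral_density)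
  also have "\<dots> = (\<integral>\<^sup>+u. ennreal \<bar>det L\<bar> * h (L *v u) \<partial>lborel)"
    by (simp add: nn_integral_distr)
  finally show ?thesis .
qed



lemma inner_sym_mat:
  fixes S :: "real^'n^'n"
  assumes "transpose S = S"
  shows "x \<bullet> (S *v y) = (S *v x) \<bullet> y"
proof -
  have "x \<bullet> (S *v y) = (x v* S) \<bullet> y" by (simp add: dot_lmul_matrix)
  also have "x v* S = transpose S *v x" by simp
  finally show ?thesis using assms by simp
qed

lemma eigen_step:
  fixes S :: "real^'n^'n"
  assumes sym: "transpose S = S" and B: "\<forall>b\<in>B. S *v b = (b \<bullet> (S *v b)) *\<^sub>R b"
    and a: "a \<noteq> 0" "\<forall>b\<in>B. b \<bullet> a = 0"
  shows "\<exists>v. norm v = 1 \<and> (\<forall>b\<in>B. b \<bullet> v = 0) \<and> S *v v = (v \<bullet> (S *v v)) *\<^sub>R v"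
proof -
  define V where "V = {x. \<forall>b\<in>B. b \<bullet> x = 0}"
  have subV: "subspace V" unfolding V_def by (auto simp: subspace_def inner_add_right)
  have inv: "S *v x \<in> V" if "x \<in> V" for x
  proof -
    { fix b assume "b \<in> B"
      have "b \<bullet> (S *v x) = (S *v b) \<bullet> x" using inner_sym_mat[OF sym] .
      also have "\<dots> = (b \<bullet> (S *v b)) * (b \<bullet> x)"
        by (subst B[rule_format, OF \<open>b\<in>B\<close>]) (simp only: inner_scaleR_left)
      also have "\<dots> = 0" using \<open>b\<in>B\<close> that by (simp add: V_def)
      finally have "b \<bullet> (S *v x) = 0" . }
    then show ?thesis by (simp add: V_def)
  qed
  define K where "K = V \<inter> sphere 0 1"
  have "closed V" unfolding V_def
    by (simp add: Collect_ball_eq closed_INT closed_Collect_eq continuous_on_inner continuous_on_const continuous_on_id)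
  then have cK: "compact K" unfolding K_def using compact_Int_closed[OF compact_sphere \<open>closed V\<close>, of 0 1] by (simp add: Int_commute)
  have aK: "a /\<^sub>R norm a \<in> K" using a by (auto simp: K_def V_def)
  have cont: "continuous_on K (\<lambda>x. x \<bullet> (S *v x))"
    by (intro continuous_intros)
  obtain v where vK: "v \<in> K" and vmax: "\<And>y. y \<in> K \<Longrightarrow> y \<bullet> (S *v y) \<le> v \<bullet> (S *v v)"
    using continuous_attains_sup[OF cK _ cont] aK by blast
  define l where "l = v \<bullet> (S *v v)"
  have vV: "v \<in> V" and nv: "norm v = 1" using vK by (auto simp: K_def)
  have vv: "v \<bullet> v = 1" using nv by (simp add: dot_square_norm)
  have quad: "\<forall>y\<in>V. y \<bullet> (S *v y) \<le> l * (y \<bullet> y)"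
  proof
    fix y assume yV: "y \<in> V"
    show "y \<bullet> (S *v y) \<le> l * (y \<bullet> y)"
    proof (cases "y = 0")
      case True then show ?thesis by simp
    next
      case False
      have "y /\<^sub>R norm y \<in> K" using yV False subspace_scale[OF subV yV] by (auto simp: K_def)
      from vmax[OF this] have "(y /\<^sub>R norm y) \<bullet> (S *v (y /\<^sub>R norm y)) \<le> l" by (simp add: l_def)
      then have "(y \<bullet> (S *v y)) / (norm y)^2 \<le> l"
        by (simp add: matrix_vector_mult_scaleR power2_eq_square divide_inverse mult.commute mult.left_commute)
      then have "y \<bullet> (S *v y) \<le> l * (norm y)^2" using False by (simp add: divide_le_eq)
      then show ?thesis by (simp add: dot_square_norm)
    qed
  qed
  have perp: "w \<bullet> (S *v v) = 0" if wV: "w \<in> V" and wv: "w \<bullet> v = 0" for w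
  proof -
    define c where "c = w \<bullet> (S *v v)"
    define d where "d = w \<bullet> (S *v w) - l * (w \<bullet> w)"
    have vSw: "v \<bullet> (S *v w) = c" using inner_sym_mat[OF sym, of v w] by (simp add: c_def inner_commute)
    have "2 * t * c + t^2 * d \<le> 0" for t
    proof -
      have "v + t *\<^sub>R w \<in> V" using subV vV wV by (simp add: subspace_add subspace_scale)
      from quad[rule_format, OF this]
      have q: "(v + t *\<^sub>R w) \<bullet> (S *v (v + t *\<^sub>R w)) \<le> l * ((v + t *\<^sub>R w) \<bullet> (v + t *\<^sub>R w))" .
      have e1: "(v + t *\<^sub>R w) \<bullet> (S *v (v + t *\<^sub>R w)) = l + 2 * t * c + t^2 * (w \<bullet> (S *v w))"
        unfolding matrix_vector_right_distrib matrix_vector_mult_scaleR inner_add_left inner_add_right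
          inner_scaleR_left inner_scaleR_right vSw
        by (simp add: l_def c_def power2_eq_square algebra_simps)
      have e2: "(v + t *\<^sub>R w) \<bullet> (v + t *\<^sub>R w) = 1 + t^2 * (w \<bullet> w)"
        unfolding inner_add_left inner_add_right inner_scaleR_left inner_scaleR_right
        using vv wv by (simp add: inner_commute[of v w] power2_eq_square)
      show ?thesis using q unfolding e1 e2 d_def by (simp add: algebra_simps)
    qed
    define k where "k = \<bar>d\<bar> + 1"
    have kpos: "k > 0" by (simp add: k_def add_nonneg_pos)
    have "2 * (c / k) * c + (c / k)^2 * d = c^2 * (2 * k + d) / k^2"
      using kpos by (simp add: field_simps power2_eq_square)
    with this[symmetric] \<open>\<And>t. 2 * t * c + t^2 * d \<le> 0\<close>[of "c / k"]
    have "c^2 * (2 * k + d) / k^2 \<le> 0" by simp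
    then have "c^2 * (2 * k + d) \<le> 0" using kpos by (simp add: divide_le_0_iff)
    moreover have "2 * k + d > 0" unfolding k_def by (cases "d \<ge> 0") auto
    ultimately have "c^2 \<le> 0" by (simp add: mult_le_0_iff)
    then show ?thesis by (simp add: c_def)
  qed
  define w where "w = S *v v - l *\<^sub>R v"
  have wV: "w \<in> V" using inv[OF vV] vV subV unfolding w_def by (simp add: subspace_diff subspace_scale)
  have wv: "w \<bullet> v = 0" unfolding w_def inner_diff_left inner_scaleR_left vv
    by (simp add: l_def inner_commute[of "S *v v" v])
  have "w \<bullet> w = w \<bullet> (S *v v) - l * (w \<bullet> v)" by (simp add: w_def inner_diff_right)
  also have "\<dots> = 0" using perp[OF wV wv] wv by simp
  finally have "w = 0" by simp
  then have "S *v v = l *\<^sub>R v" by (simp add: w_def)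
  then show ?thesis using nv vV by (auto simp: V_def l_def)
qed

definition orthonormal_set :: "(real^'n) set \<Rightarrow> bool" where
  "orthonormal_set B \<longleftrightarrow> (\<forall>b\<in>B. \<forall>c\<in>B. b \<bullet> c = (if b = c then 1 else 0))"

lemma ortho_coeff:
  assumes "orthonormal_set B" "finite B" "c \<in> B"
  shows "c \<bullet> (\<Sum>b\<in>B. f b *\<^sub>R b) = f c"
proof -
  have "c \<bullet> (\<Sum>b\<in>B. f b *\<^sub>R b) = (\<Sum>b\<in>B. f b * (c \<bullet> b))"
    by (simp add: inner_sum_right)
  also have "\<dots> = (\<Sum>b\<in>B. if b = c then f b else 0)"
    using assms(1,3) by (intro sum.cong) (auto simp: orthonormal_set_def)
  also have "\<dots> = f c" using assms(2,3) by (simp add: sum.delta')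
  finally show ?thesis .
qed

lemma eig_set:
  fixes S :: "real^'n^'n"
  assumes sym: "transpose S = S"
  shows "k \<le> CARD('n) \<Longrightarrow> \<exists>B. finite B \<and> card B = k \<and> orthonormal_set B \<and>
     (\<forall>b\<in>B. S *v b = (b \<bullet> (S *v b)) *\<^sub>R b)"
proof (induction k)
  case 0
  show ?case by (intro exI[of _ "{}"]) (auto simp: orthonormal_set_def)
next
  case (Suc k)
  then obtain B where fB: "finite B" and cB: "card B = k" and oB: "orthonormal_set B"
    and eB: "\<forall>b\<in>B. S *v b = (b \<bullet> (S *v b)) *\<^sub>R b" by auto
  have po: "pairwise orthogonal B" using oB by (auto simp: pairwise_def orthogonal_def orthonormal_set_def)
  have "0 \<notin> B" using oB by (force simp: orthonormal_set_def)
  then have indB: "independent B" using pairwise_orthogonal_independent[OF po] by blast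
  have "dim (span B) = k" using dim_span_eq_card_independent[OF indB] cB by simp
  moreover have "dim (UNIV :: (real^'n) set) = CARD('n)" by simp
  ultimately have "span B \<noteq> UNIV" using Suc.prems by (metis Suc_n_not_le_n)
  then obtain a where a: "a \<noteq> 0" "\<forall>x\<in>span B. a \<bullet> x = 0" using span_not_UNIV_orthogonal by blast
  have "\<forall>b\<in>B. b \<bullet> a = 0" using a(2) span_base by (force simp: inner_commute)
  from eigen_step[OF sym eB a(1) this] obtain v where v: "norm v = 1" "\<forall>b\<in>B. b \<bullet> v = 0"
    "S *v v = (v \<bullet> (S *v v)) *\<^sub>R v" by blast
  have vv: "v \<bullet> v = 1" using v(1) by (simp add: dot_square_norm)
  have vB: "v \<notin> B" using v(2) vv by auto
  show ?case
  proof (intro exI[of _ "insert v B"] conjI)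
    show "finite (insert v B)" using fB by simp
    show "card (insert v B) = Suc k" using fB vB cB by simp
    show "orthonormal_set (insert v B)" using oB v(2) vv
      by (auto simp: orthonormal_set_def inner_commute)
    show "\<forall>b\<in>insert v B. S *v b = (b \<bullet> (S *v b)) *\<^sub>R b" using eB v(3) by auto
  qed
qed

lemma spectral:
  fixes S :: "real^'n^'n"
  assumes sym: "transpose S = S"
  obtains B where "finite B" "orthonormal_set B" "\<forall>b\<in>B. S *v b = (b \<bullet> (S *v b)) *\<^sub>R b"
    "\<And>x. x = (\<Sum>b\<in>B. (b \<bullet> x) *\<^sub>R b)"
proof -
  obtain B where fB: "finite B" and cB: "card B = CARD('n)" and oB: "orthonormal_set B"
    and eB: "\<forall>b\<in>B. S *v b = (b \<bullet> (S *v b)) *\<^sub>R b" using eig_set[OF sym, of "CARD('n)"] by auto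
  have po: "pairwise orthogonal B" using oB by (auto simp: pairwise_def orthogonal_def orthonormal_set_def)
  have "0 \<notin> B" using oB by (force simp: orthonormal_set_def)
  then have indB: "independent B" using pairwise_orthogonal_independent[OF po] by blast
  have sp: "UNIV \<subseteq> span B" using card_eq_dim[of B UNIV] indB cB fB by simp
  have "x = (\<Sum>b\<in>B. (b \<bullet> x) *\<^sub>R b)" for x
  proof -
    define y where "y = x - (\<Sum>b\<in>B. (b \<bullet> x) *\<^sub>R b)"
    have "orthogonal y c" if "c \<in> B" for c
      using ortho_coeff[OF oB fB that, of "\<lambda>b. b \<bullet> x"] that
      by (simp add: y_def orthogonal_def inner_diff_left inner_diff_right inner_commute[of _ c])
    then have "orthogonal y y" using orthogonal_to_span sp by blast
    then have "y = 0" by (simp add: orthogonal_self)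
    then show ?thesis by (simp add: y_def)
  qed
  then show ?thesis using that fB oB eB by blast
qed

lemma vec_eq_by_inner:
  fixes u w :: "real^'n"
  assumes "\<And>y. u \<bullet> y = w \<bullet> y"
  shows "u = w"
proof -
  have "(u - w) \<bullet> (u - w) = 0" using assms[of "u - w"] by (simp add: inner_diff_left)
  then show ?thesis by simp
qed

lemma transpose_eq_by_inner:
  fixes R :: "real^'n^'n"
  assumes "\<And>x y. (R *v x) \<bullet> y = x \<bullet> (R *v y)"
  shows "transpose R = R"
proof -
  have "transpose R *v x = R *v x" for x
  proof (rule vec_eq_by_inner)
    fix y
    have "(transpose R *v x) \<bullet> y = (x v* R) \<bullet> y" by simp
    also have "\<dots> = x \<bullet> (R *v y)" by (simp add: dot_lmul_matrix)
    finally show "(transpose R *v x) \<bullet> y = (R *v x) \<bullet> y" using assms by simp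
  qed
  then show ?thesis by (simp add: matrix_eq)
qed

lemma mat_sqrt:
  fixes S :: "real^'n^'n"
  assumes sym: "transpose S = S" and pd: "pos_def S"
  obtains R where "transpose R = R" "pos_def R" "R ** R = S"
proof -
  obtain B where fB: "finite B" and oB: "orthonormal_set B"
    and eB: "\<forall>b\<in>B. S *v b = (b \<bullet> (S *v b)) *\<^sub>R b" and ex: "\<And>x. x = (\<Sum>b\<in>B. (b \<bullet> x) *\<^sub>R b)"
    using spectral[OF sym] by blast
  define lam where "lam b = b \<bullet> (S *v b)" for b
  have lpos: "lam b > 0" if "b \<in> B" for b
  proof -
    have "b \<bullet> b = 1" using oB that by (auto simp: orthonormal_set_def)
    then have "b \<noteq> 0" by auto
    then show ?thesis using pd by (simp add: pos_def_def lam_def)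
  qed
  define f where "f x = (\<Sum>b\<in>B. (sqrt (lam b) * (b \<bullet> x)) *\<^sub>R b)" for x
  have lin: "linear f"
    by (rule linearI) (simp_all add: f_def inner_add_right distrib_left scaleR_add_left sum.distrib
        scaleR_sum_right mult.left_commute)
  define R where "R = matrix f"
  have Rv: "R *v x = f x" for x using matrix_works[OF lin[folded linear_matrix_vector_mul_eq]] by (simp add: R_def)
  have bR: "b \<bullet> (R *v x) = sqrt (lam b) * (b \<bullet> x)" if "b \<in> B" for b x
    unfolding Rv f_def using ortho_coeff[OF oB fB that] .
  have Rin: "(R *v x) \<bullet> y = (\<Sum>b\<in>B. sqrt (lam b) * (b \<bullet> x) * (b \<bullet> y))" for x y
    by (simp add: Rv f_def inner_sum_left)
  have symR: "transpose R = R"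
  proof (rule transpose_eq_by_inner)
    fix x y :: "real^'n"
    have "x \<bullet> (R *v y) = (R *v y) \<bullet> x" by (simp add: inner_commute)
    then show "(R *v x) \<bullet> y = x \<bullet> (R *v y)" unfolding Rin by (simp add: mult_ac)
  qed
  have pdR: "pos_def R"
    unfolding pos_def_def
  proof (intro allI impI)
    fix x :: "real^'n" assume "x \<noteq> 0"
    have "\<exists>b\<in>B. b \<bullet> x \<noteq> 0"
    proof (rule ccontr)
      assume "\<not> ?thesis"
      then have "(\<Sum>b\<in>B. (b \<bullet> x) *\<^sub>R b) = 0" by simp
      with ex[of x] \<open>x \<noteq> 0\<close> show False by simp
    qed
    then obtain b0 where b0: "b0 \<in> B" "b0 \<bullet> x \<noteq> 0" by blast
    have "x \<bullet> (R *v x) = (\<Sum>b\<in>B. sqrt (lam b) * (b \<bullet> x) * (b \<bullet> x))"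
      by (simp add: inner_commute[of x] Rin)
    also have "\<dots> > 0"
    proof (rule sum_pos2[OF fB b0(1)])
      show "0 < sqrt (lam b0) * (b0 \<bullet> x) * (b0 \<bullet> x)"
        unfolding mult.assoc
      proof (rule mult_pos_pos)
        show "0 < (b0 \<bullet> x) * (b0 \<bullet> x)" using b0(2) by (auto simp: zero_less_mult_iff linorder_neq_iff)
      qed (use lpos[OF b0(1)] in simp)
      show "0 \<le> sqrt (lam b) * (b \<bullet> x) * (b \<bullet> x)" if "b \<in> B" for b
        using lpos[OF that] by (simp add: mult.assoc)
    qed
    finally show "x \<bullet> (R *v x) > 0" .
  qed
  have "(R ** R) *v x = S *v x" for x
  proof -
    have "(R ** R) *v x = (\<Sum>b\<in>B. (sqrt (lam b) * (b \<bullet> (R *v x))) *\<^sub>R b)"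
      by (simp add: matrix_vector_mul_assoc[symmetric] Rv f_def)
    also have "\<dots> = (\<Sum>b\<in>B. (lam b * (b \<bullet> x)) *\<^sub>R b)"
      by (intro sum.cong refl) (simp add: bR lpos less_imp_le mult.assoc[symmetric])
    also have "\<dots> = (\<Sum>b\<in>B. (b \<bullet> x) *\<^sub>R (S *v b))"
    proof (intro sum.cong refl)
      fix b assume "b \<in> B"
      then have "S *v b = lam b *\<^sub>R b" using eB by (simp add: lam_def)
      then show "(lam b * (b \<bullet> x)) *\<^sub>R b = (b \<bullet> x) *\<^sub>R (S *v b)" by (simp add: mult.commute)
    qed
    also have "\<dots> = S *v (\<Sum>b\<in>B. (b \<bullet> x) *\<^sub>R b)"
      by (simp add: vec.sum matrix_vector_mult_scaleR)
    also have "\<dots> = S *v x" using ex[of x] by simp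
    finally show ?thesis .
  qed
  then have "R ** R = S" by (simp add: matrix_eq)
  then show ?thesis using that symR pdR by blast
qed



definition phi :: "real^'m \<Rightarrow> real" where
  "phi u = (\<Prod>b\<in>Basis. std_normal_density (u \<bullet> b))"

lemma phi_nonneg: "phi u \<ge> 0"
  unfolding phi_def by (intro prod_nonneg) (simp add: normal_density_nonneg)

lemma phi_measurable[measurable]: "phi \<in> borel_measurable borel"
  unfolding phi_def by measurable

lemma nn_integral_phi: "(\<integral>\<^sup>+u. ennreal (phi (u::real^'m)) \<partial>lborel) = 1"
proof -
  interpret P: product_sigma_finite "\<lambda>_::real^'m. lborel::real measure"
    by standard
  have std1: "(\<integral>\<^sup>+x. ennreal (std_normal_density x) \<partial>lborel) = 1"
  proof -
    interpret prob_space "density lborel std_normal_density"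
      using prob_space_normal_density[of 1 0] by simp
    have "emeasure (density lborel std_normal_density) UNIV = 1"
      using emeasure_space_1 by simp
    then show ?thesis by (simp add: emeasure_density)
  qed
  have "(\<integral>\<^sup>+u. ennreal (phi (u::real^'m)) \<partial>lborel)
      = (\<integral>\<^sup>+u. ennreal (phi (u::real^'m)) \<partial>distr (\<Pi>\<^sub>M b\<in>Basis. lborel) borel (\<lambda>f. \<Sum>b\<in>Basis. f b *\<^sub>R b))"
    by (subst lborel_eq) simp
  also have "\<dots> = (\<integral>\<^sup>+f. ennreal (phi ((\<Sum>b\<in>Basis. f b *\<^sub>R b)::real^'m)) \<partial>(\<Pi>\<^sub>M b\<in>Basis. lborel))"
    by (intro nn_integral_distr) measurable
  also have "\<dots> = (\<integral>\<^sup>+f. (\<Prod>b\<in>(Basis::(real^'m) set). ennreal (std_normal_density (f b))) \<partial>(\<Pi>\<^sub>M b\<in>Basis. lborel))"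
  proof (intro nn_integral_cong)
    fix f :: "real^'m \<Rightarrow> real"
    have "((\<Sum>b\<in>Basis. f b *\<^sub>R b)::real^'m) \<bullet> c = f c" if "c \<in> Basis" for c
      using that by (simp add: inner_sum_left inner_Basis if_distrib sum.delta cong: if_cong)
    then show "ennreal (phi ((\<Sum>b\<in>Basis. f b *\<^sub>R b)::real^'m)) = (\<Prod>b\<in>Basis. ennreal (std_normal_density (f b)))"
      unfolding phi_def by (simp add: prod_ennreal normal_density_nonneg)
  qed
  also have "\<dots> = (\<Prod>b\<in>(Basis::(real^'m) set). \<integral>\<^sup>+x. ennreal (std_normal_density x) \<partial>lborel)"
    by (rule P.product_nn_integral_prod) auto
  also have "\<dots> = 1" by (simp add: std1)
  finally show ?thesis .
qed



lemma phi_formula: "phi (u::real^'m) = exp (- (u \<bullet> u) / 2) / sqrt ((2 * pi) ^ CARD('m))"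
proof -
  have "phi u = (\<Prod>b\<in>(Basis::(real^'m) set). (1 / sqrt (2 * pi)) * exp (- ((u \<bullet> b)\<^sup>2) / 2))"
    unfolding phi_def by (simp add: std_normal_density_def)
  also have "\<dots> = (\<Prod>b\<in>(Basis::(real^'m) set). 1 / sqrt (2 * pi)) * (\<Prod>b\<in>(Basis::(real^'m) set). exp (- ((u \<bullet> b)\<^sup>2) / 2))"
    by (rule prod.distrib)
  also have "\<dots> = (1 / sqrt (2 * pi)) ^ card (Basis::(real^'m) set) * exp (\<Sum>b\<in>(Basis::(real^'m) set). - ((u \<bullet> b)\<^sup>2) / 2)"
    by (simp only: prod_constant exp_sum[OF finite_Basis])
  also have "(\<Sum>b\<in>(Basis::(real^'m) set). - ((u \<bullet> b)\<^sup>2) / 2) = - (u \<bullet> u) / 2"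
    by (simp add: euclidean_inner[of u u] power2_eq_square sum_negf sum_divide_distrib[symmetric])
  also have "card (Basis::(real^'m) set) = CARD('m)" by simp
  finally have "phi u = (1 / sqrt (2 * pi)) ^ CARD('m) * exp (- (u \<bullet> u) / 2)" .
  moreover have "(1 / sqrt (2 * pi)) ^ CARD('m) = 1 / sqrt ((2 * pi) ^ CARD('m))"
    by (simp only: real_sqrt_power power_one_over)
  ultimately show ?thesis by simp
qed

lemma inner_transpose_mat:
  fixes M :: "real^'n^'m"
  shows "x \<bullet> (transpose M *v y) = (M *v x) \<bullet> y"
proof -
  have "x \<bullet> (transpose M *v y) = (y v* M) \<bullet> x" by (simp add: inner_commute)
  also have "\<dots> = y \<bullet> (M *v x)" by (simp add: dot_lmul_matrix)
  finally show ?thesis by (simp add: inner_commute)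
qed

lemma gauss_repr:
  fixes S L :: "real^'m^'m" and X :: "(real^'m) set"
  assumes invL: "invertible L" and LL: "L ** transpose L = S" and X: "X \<in> sets borel"
  shows "emeasure (gaussian_measure S) X = (\<integral>\<^sup>+u. ennreal (phi u) * indicator X (L *v u) \<partial>lborel)"
proof -
  define Li where "Li = matrix_inv L"
  have LiL: "Li ** L = mat 1" and LLi: "L ** Li = mat 1"
    using matrix_inv_props[OF invL] by (auto simp: Li_def)
  have tr1: "transpose L ** transpose Li = mat 1"
    using arg_cong[OF LiL, of transpose] by (simp add: matrix_transpose_mul transpose_mat)
  have tr2: "transpose Li ** transpose L = mat 1"
    using arg_cong[OF LLi, of transpose] by (simp add: matrix_transpose_mul transpose_mat)
  have "S ** (transpose Li ** Li) = L ** (transpose L ** transpose Li) ** Li"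
    by (simp add: LL[symmetric] matrix_mul_assoc)
  then have e1: "S ** (transpose Li ** Li) = mat 1" by (simp add: tr1 LLi)
  have "(transpose Li ** Li) ** S = transpose Li ** (Li ** L) ** transpose L"
    by (simp add: LL[symmetric] matrix_mul_assoc)
  then have e2: "(transpose Li ** Li) ** S = mat 1" by (simp add: tr2 LiL)
  have Si: "matrix_inv S = transpose Li ** Li" using matrix_inv_unique[OF e1 e2] .
  have quad: "(L *v u) \<bullet> (matrix_inv S *v (L *v u)) = u \<bullet> u" for u
  proof -
    have i1: "Li *v (L *v u) = u" by (simp only: matrix_vector_mul_assoc LiL matrix_vector_mul_lid)
    have "matrix_inv S *v (L *v u) = (transpose Li ** Li) *v (L *v u)" by (simp only: Si)
    also have "\<dots> = transpose Li *v (Li *v (L *v u))" by (rule matrix_vector_mul_assoc[symmetric])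
    also have "\<dots> = transpose Li *v u" by (simp only: i1)
    finally have i2: "matrix_inv S *v (L *v u) = transpose Li *v u" .
    have h1: "(L *v u) \<bullet> (matrix_inv S *v (L *v u)) = (L *v u) \<bullet> (transpose Li *v u)" by (simp only: i2)
    have h2: "(L *v u) \<bullet> (transpose Li *v u) = (Li *v (L *v u)) \<bullet> u" using inner_transpose_mat[of "L *v u" Li u] by (simp only:)
    have h3: "(Li *v (L *v u)) \<bullet> u = u \<bullet> u" by (simp only: i1)
    show ?thesis by (rule trans[OF h1 trans[OF h2 h3]])
  qed
  have detS: "det S = det L * det L" using LL det_mul[of L "transpose L"] det_transpose[of L] by simp
  have dL: "det L \<noteq> 0" using invL by (simp add: invertible_det_nz)
  have pw: "\<bar>det L\<bar> * gaussian_density S (L *v u) = phi u" for u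
  proof -
    have sq: "sqrt ((2 * pi) ^ CARD('m) * det S) = sqrt ((2 * pi) ^ CARD('m)) * \<bar>det L\<bar>"
      unfolding detS real_sqrt_mult by (simp add: real_sqrt_abs2)
    have g: "gaussian_density S (L *v u) = exp (- (u \<bullet> u) / 2) / (sqrt ((2 * pi) ^ CARD('m)) * \<bar>det L\<bar>)"
      unfolding gaussian_density_def quad sq ..
    have "\<bar>det L\<bar> * (exp (- (u \<bullet> u) / 2) / (sqrt ((2 * pi) ^ CARD('m)) * \<bar>det L\<bar>))
        = exp (- (u \<bullet> u) / 2) / sqrt ((2 * pi) ^ CARD('m))"
      using dL by simp
    then show ?thesis unfolding g phi_formula .
  qed
  have gm[measurable]: "gaussian_density S \<in> borel_measurable borel"
    unfolding gaussian_density_def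
    by (intro borel_measurable_divide borel_measurable_const borel_measurable_continuous_onI continuous_intros) auto
  have Lm[measurable]: "(*v) L \<in> borel_measurable borel"
    by (intro borel_measurable_continuous_onI continuous_intros)
  have "emeasure (gaussian_measure S) X = (\<integral>\<^sup>+z. ennreal (gaussian_density S z) * indicator X z \<partial>lborel)"
    unfolding gaussian_measure_def using X by (simp add: emeasure_density)
  also have "\<dots> = (\<integral>\<^sup>+u. ennreal \<bar>det L\<bar> * (ennreal (gaussian_density S (L *v u)) * indicator X (L *v u)) \<partial>lborel)"
    by (rule nn_integral_linear_cv[OF invL]) (use X in measurable)
  also have "\<dots> = (\<integral>\<^sup>+u. ennreal (phi u) * indicator X (L *v u) \<partial>lborel)"
  proof (intro nn_integral_cong)
    fix u
    have "ennreal \<bar>det L\<bar> * ennreal (gaussian_density S (L *v u)) = ennreal (phi u)"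
      using pw[of u] ennreal_mult'[of "\<bar>det L\<bar>" "gaussian_density S (L *v u)"] by simp
    then show "ennreal \<bar>det L\<bar> * (ennreal (gaussian_density S (L *v u)) * indicator X (L *v u)) = ennreal (phi u) * indicator X (L *v u)"
      by (metis mult.assoc)
  qed
  finally show ?thesis .
qed



lemma quad_cont: "continuous_on UNIV (\<lambda>u::real^'m. u \<bullet> (T *v u))"
  by (intro continuous_intros)

lemma quad_sets: "{u::real^'m. \<tau> < u \<bullet> (T *v u)} \<in> sets borel"
  by (intro borel_open open_Collect_less continuous_intros)

lemma gauss_compare:
  fixes Ta Tb :: "real^'m^'m"
  assumes tau: "\<tau> > 0" and pdb: "pos_def Tb" and dif: "\<forall>u. u \<noteq> 0 \<longrightarrow> u \<bullet> (Tb *v u) < u \<bullet> (Ta *v u)"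
  shows "enn2real (\<integral>\<^sup>+u. ennreal (phi u) * indicator {u. \<tau> < u \<bullet> (Tb *v u)} u \<partial>lborel)
       < enn2real (\<integral>\<^sup>+u. ennreal (phi u) * indicator {u. \<tau> < u \<bullet> (Ta *v u)} u \<partial>lborel)"
proof -
  define Fa where "Fa = {u::real^'m. \<tau> < u \<bullet> (Ta *v u)}"
  define Fb where "Fb = {u::real^'m. \<tau> < u \<bullet> (Tb *v u)}"
  define e :: "real^'m" where "e = axis undefined 1"
  have e0: "e \<noteq> 0" by (simp add: e_def axis_eq_0_iff)
  define qa where "qa = e \<bullet> (Ta *v e)"
  define qb where "qb = e \<bullet> (Tb *v e)"
  have qb0: "qb > 0" using pdb e0 by (simp add: pos_def_def qb_def)
  have qab: "qb < qa" using dif e0 by (simp add: qa_def qb_def)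
  define s where "s = sqrt (2 * \<tau> / (qa + qb))"
  have s2: "s^2 = 2 * \<tau> / (qa + qb)" using tau qb0 qab by (simp add: s_def)
  define u0 where "u0 = s *\<^sub>R e"
  have u0a: "u0 \<bullet> (Ta *v u0) = s^2 * qa" by (simp add: u0_def qa_def matrix_vector_mult_scaleR power2_eq_square)
  have u0b: "u0 \<bullet> (Tb *v u0) = s^2 * qb" by (simp add: u0_def qb_def matrix_vector_mult_scaleR power2_eq_square)
  have "s^2 * qb < \<tau>" unfolding s2 using tau qb0 qab by (simp add: field_simps)
  moreover have "\<tau> < s^2 * qa" unfolding s2 using tau qb0 qab by (simp add: field_simps)
  ultimately have u0G: "u0 \<in> {u. u \<bullet> (Tb *v u) < \<tau>} \<inter> {u. \<tau> < u \<bullet> (Ta *v u)}"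
    using u0a u0b by simp
  have "open ({u::real^'m. u \<bullet> (Tb *v u) < \<tau>} \<inter> {u. \<tau> < u \<bullet> (Ta *v u)})"
    by (intro open_Int open_Collect_less continuous_intros)
  then obtain r where r: "r > 0" "ball u0 r \<subseteq> {u. u \<bullet> (Tb *v u) < \<tau>} \<inter> {u. \<tau> < u \<bullet> (Ta *v u)}"
    using u0G open_contains_ball by blast
  have FbFa: "Fb \<subseteq> Fa"
  proof
    fix u assume "u \<in> Fb"
    then have "u \<noteq> 0" using tau by (auto simp: Fb_def)
    then show "u \<in> Fa" using \<open>u \<in> Fb\<close> dif by (force simp: Fa_def Fb_def)
  qed
  have ballFa: "ball u0 r \<subseteq> Fa" and ballFb: "ball u0 r \<inter> Fb = {}"
    using r(2) by (auto simp: Fa_def Fb_def)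
  define c where "c = exp (- ((norm u0 + r)^2) / 2) / sqrt ((2 * pi) ^ CARD('m))"
  have c0: "c > 0" by (simp add: c_def)
  have phic: "phi u \<ge> c" if "u \<in> ball u0 r" for u
  proof -
    have "norm u \<le> norm u0 + r" using that norm_triangle_ineq2[of u u0] 
      by (auto simp: dist_norm norm_minus_commute)
    then have "u \<bullet> u \<le> (norm u0 + r)^2"
      by (simp add: dot_square_norm power_mono)
    then show ?thesis unfolding phi_formula c_def
      by (intro divide_right_mono) auto
  qed
  have [measurable]: "ball u0 r \<in> sets borel" by simp
  have [measurable]: "Fa \<in> sets borel" "Fb \<in> sets borel" unfolding Fa_def Fb_def by (rule quad_sets)+
  define Ia where "Ia = (\<integral>\<^sup>+u. ennreal (phi u) * indicator Fa u \<partial>lborel)"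
  define Ib where "Ib = (\<integral>\<^sup>+u. ennreal (phi u) * indicator Fb u \<partial>lborel)"
  define m where "m = unit_ball_vol (real DIM(real^'m)) * r ^ DIM(real^'m)"
  have m0: "m > 0" using r by (simp add: m_def)
  have mball: "emeasure lborel (ball u0 r) = ennreal m" using r by (simp add: emeasure_ball m_def)
  have "Ib + ennreal (c * m) = (\<integral>\<^sup>+u. ennreal (phi u) * indicator Fb u \<partial>lborel) + (\<integral>\<^sup>+u. ennreal c * indicator (ball u0 r) u \<partial>lborel)"
  proof -
    have "(\<integral>\<^sup>+u. ennreal c * indicator (ball u0 r) u \<partial>lborel) = ennreal c * emeasure lborel (ball u0 r)"
      by (rule nn_integral_cmult_indicator) simp
    also have "\<dots> = ennreal (c * m)" unfolding mball using c0 by (rule ennreal_mult'[symmetric, OF less_imp_le])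
    finally show ?thesis by (simp only: Ib_def)
  qed
  also have "\<dots> = (\<integral>\<^sup>+u. ennreal (phi u) * indicator Fb u + ennreal c * indicator (ball u0 r) u \<partial>lborel)"
    by (rule nn_integral_add[symmetric]) measurable
  also have "\<dots> \<le> Ia"
    unfolding Ia_def
  proof (intro nn_integral_mono)
    fix u :: "real^'m"
    show "ennreal (phi u) * indicator Fb u + ennreal c * indicator (ball u0 r) u \<le> ennreal (phi u) * indicator Fa u"
    proof (cases "u \<in> ball u0 r")
      case True
      then have "u \<notin> Fb" "u \<in> Fa" using ballFa ballFb by auto
      then show ?thesis using True phic[OF True] by (simp add: ennreal_leI)
    next
      case False
      then show ?thesis using FbFa by (auto simp: indicator_def)
    qed
  qed
  finally have IbIa: "Ib + ennreal (c * m) \<le> Ia" .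
  have "Ia \<le> (\<integral>\<^sup>+u. ennreal (phi (u::real^'m)) \<partial>lborel)"
    unfolding Ia_def by (intro nn_integral_mono) (simp add: indicator_def)
  then have Ia1: "Ia \<le> 1" by (simp only: nn_integral_phi)
  have "Ib \<le> Ib + ennreal (c * m)" by simp
  then have Ib1: "Ib \<le> 1" using IbIa Ia1 by (rule order.trans[OF order.trans])
  obtain yb where yb: "Ib = ennreal yb" "yb \<ge> 0"
  proof (cases Ib rule: ennreal_cases)
    case (real r) then show ?thesis using that by blast
  next
    case top with Ib1 show ?thesis by (simp add: top_unique)
  qed
  obtain ya where ya: "Ia = ennreal ya" "ya \<ge> 0"
  proof (cases Ia rule: ennreal_cases)
    case (real r) then show ?thesis using that by blast
  next
    case top with Ia1 show ?thesis by (simp add: top_unique)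
  qed
  have "ennreal (yb + c * m) \<le> ennreal ya"
  proof -
    have "ennreal (yb + c * m) = ennreal yb + ennreal (c * m)"
      by (rule ennreal_plus) (use yb c0 m0 in auto)
    then show ?thesis using IbIa yb ya by simp
  qed
  then have "yb + c * m \<le> ya" using ya(2) by (simp add: ennreal_le_iff)
  then have "yb < ya" using mult_pos_pos[OF c0 m0] by linarith
  then have "enn2real Ib < enn2real Ia" using ya yb by simp
  then show ?thesis unfolding Ia_def Ib_def Fa_def Fb_def .
qed



lemma transpose_add_mat: "transpose (A + B :: real^'n^'n) = transpose A + transpose B"
  by (simp add: transpose_def vec_eq_iff)

lemma inner_mat_left:
  fixes M :: "real^'n^'m"
  shows "x \<bullet> (M *v y) = (transpose M *v x) \<bullet> y"
  using inner_transpose_mat[of x "transpose M" y] by (simp only: transpose_transpose)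

lemma sym_of_blocks:
  assumes bd: "block_diag blk D" and bs: "\<forall>j. block_symmetric blk j D"
  shows "transpose D = D"
proof -
  have "D $ q $ p = D $ p $ q" for p q
  proof (cases "blk p = blk q")
    case True then show ?thesis using bs by (auto simp: block_symmetric_def)
  next
    case False then show ?thesis using bd by (auto simp: block_diag_def)
  qed
  then show ?thesis by (simp add: transpose_def vec_eq_iff)
qed

lemma block_pd:
  fixes D :: "real^'n^'n" and blk :: "'n \<Rightarrow> 'k"
  assumes bd: "block_diag blk D" and bp: "\<forall>j. block_pos_def blk j D"
  shows "pos_def D"
  unfolding pos_def_def
proof (intro allI impI)
  fix x :: "real^'n" assume x0: "x \<noteq> 0"
  define J where "J = range blk"
  have fJ: "finite J" unfolding J_def by simp
  define xj where "xj j = (\<chi> p. if blk p = j then x $ p else 0)" for j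
  have xsum: "x = (\<Sum>j\<in>J. xj j)"
  proof -
    have "(\<Sum>j\<in>J. xj j) $ p = x $ p" for p
    proof -
      have "(\<Sum>j\<in>J. xj j) $ p = (\<Sum>j\<in>J. if blk p = j then x $ p else 0)"
        by (simp add: xj_def sum_component)
      also have "\<dots> = x $ p" using fJ by (simp add: J_def)
      finally show ?thesis .
    qed
    then show ?thesis by (simp add: vec_eq_iff)
  qed
  have cross: "xj j \<bullet> (D *v xj k) = 0" if "j \<noteq> k" for j k
  proof -
    have zz: "(xj j) $ p * (D *v xj k) $ p = 0" for p
    proof (cases "blk p = j")
      case False then show ?thesis by (simp add: xj_def)
    next
      case True
      have "(D *v xj k) $ p = (\<Sum>q\<in>UNIV. D $ p $ q * (xj k) $ q)"
        by (simp add: matrix_vector_mult_def)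
      also have "\<dots> = 0"
      proof (intro sum.neutral ballI)
        fix q show "D $ p $ q * (xj k) $ q = 0"
          using bd True that by (cases "blk q = k") (auto simp: xj_def block_diag_def)
      qed
      finally show ?thesis by simp
    qed
    show ?thesis unfolding inner_vec_def inner_real_def
      using sum.neutral[of UNIV "\<lambda>p. (xj j) $ p * (D *v xj k) $ p"] zz by blast
  qed
  have "x \<bullet> (D *v x) = (\<Sum>k\<in>J. \<Sum>j\<in>J. xj j \<bullet> (D *v xj k))"
    by (subst (1 2) xsum) (simp add: vec.sum inner_sum_left inner_sum_right)
  also have "\<dots> = (\<Sum>j\<in>J. \<Sum>k\<in>J. xj j \<bullet> (D *v xj k))" by (rule sum.swap)
  also have "\<dots> = (\<Sum>j\<in>J. xj j \<bullet> (D *v xj j))"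
  proof (intro sum.cong refl)
    fix j assume "j \<in> J"
    have "(\<Sum>k\<in>J. xj j \<bullet> (D *v xj k)) = (\<Sum>k\<in>J. if k = j then xj j \<bullet> (D *v xj j) else 0)"
      by (intro sum.cong refl) (auto simp: cross)
    also have "\<dots> = xj j \<bullet> (D *v xj j)" using fJ \<open>j \<in> J\<close> by simp
    finally show "(\<Sum>k\<in>J. xj j \<bullet> (D *v xj k)) = xj j \<bullet> (D *v xj j)" .
  qed
  also have "\<dots> > 0"
  proof -
    obtain p where p: "x $ p \<noteq> 0" using x0 by (auto simp: vec_eq_iff)
    have nz: "xj (blk p) \<noteq> 0" using p by (auto simp: xj_def vec_eq_iff)
    have pos: "xj j \<bullet> (D *v xj j) > 0" if "xj j \<noteq> 0" for j
    proof -
      have "\<forall>p. blk p \<noteq> j \<longrightarrow> xj j $ p = 0" by (simp add: xj_def)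
      then show ?thesis using bp that unfolding block_pos_def_def by blast
    qed
    have nn: "xj j \<bullet> (D *v xj j) \<ge> 0" for j
      using pos[of j] by (cases "xj j = 0") auto
    show ?thesis
      by (rule sum_pos2[OF fJ, of "blk p"]) (use pos[OF nz] nn in \<open>auto simp: J_def\<close>)
  qed
  finally show "x \<bullet> (D *v x) > 0" .
qed

lemma pd_invertible:
  fixes R :: "real^'n^'n"
  assumes "pos_def R"
  shows "invertible R"
proof -
  have "inj ((*v) R)"
  proof (rule injI)
    fix x y assume "R *v x = R *v y"
    then have "R *v (x - y) = 0" by (simp add: matrix_vector_mult_diff_distrib)
    then have "(x - y) \<bullet> (R *v (x - y)) = 0" by simp
    then show "x = y" using assms unfolding pos_def_def by (metis less_irrefl right_minus_eq)
  qed
  then show ?thesis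
    by (simp add: invertible_left_inverse matrix_left_invertible_injective)
qed

lemma quadT:
  fixes Wi S :: "real^'n^'n"
  assumes "transpose Wi = Wi"
  shows "u \<bullet> ((Wi ** S ** Wi) *v u) = (Wi *v u) \<bullet> (S *v (Wi *v u))"
proof -
  have "u \<bullet> ((Wi ** S ** Wi) *v u) = u \<bullet> (Wi *v (S *v (Wi *v u)))"
    by (simp only: matrix_vector_mul_assoc matrix_mul_assoc)
  also have "\<dots> = (Wi *v u) \<bullet> (S *v (Wi *v u))"
    using inner_mat_left[of u Wi "S *v (Wi *v u)"] assms by (simp only:)
  finally show ?thesis .
qed

lemma quadP:
  fixes M :: "real^'n^'m" and D :: "real^'n^'n"
  shows "x \<bullet> ((M ** D ** transpose M) *v x) = (transpose M *v x) \<bullet> (D *v (transpose M *v x))"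
proof -
  have "x \<bullet> ((M ** D ** transpose M) *v x) = x \<bullet> (M *v (D *v (transpose M *v x)))"
    by (simp only: matrix_vector_mul_assoc matrix_mul_assoc)
  also have "\<dots> = (transpose M *v x) \<bullet> (D *v (transpose M *v x))"
    by (rule inner_mat_left)
  finally show ?thesis .
qed



lemma fa_repr:
  fixes Sz S W :: "real^'m^'m"
  assumes Wsym: "transpose W = W" and invW: "invertible W"
    and Wisym: "transpose (matrix_inv W) = matrix_inv W"
    and A: "matrix_inv Sz = matrix_inv W ** matrix_inv W"
    and Ssym: "transpose S = S" and Spd: "pos_def S"
  shows "measure (gaussian_measure S) {z. z \<bullet> (matrix_inv Sz *v z) > \<tau>}
     = enn2real (\<integral>\<^sup>+u. ennreal (phi u) * indicator {u. \<tau> < u \<bullet> ((matrix_inv W ** S ** matrix_inv W) *v u)} u \<partial>lborel)"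
    and "pos_def (matrix_inv W ** S ** matrix_inv W)"
proof -
  define Wi where "Wi = matrix_inv W"
  define T where "T = Wi ** S ** Wi"
  have WWi: "W ** Wi = mat 1" and WiW: "Wi ** W = mat 1"
    using matrix_inv_props[OF invW] by (auto simp: Wi_def)
  have Wisym': "transpose Wi = Wi" using Wisym by (simp add: Wi_def)
  have invWi: "invertible Wi" using WWi WiW invertible_def by blast
  have Tsym: "transpose T = T"
    by (simp add: T_def matrix_transpose_mul Wisym' Ssym matrix_mul_assoc)
  have Tpd: "pos_def T"
    unfolding pos_def_def
  proof (intro allI impI)
    fix u :: "real^'m" assume "u \<noteq> 0"
    then have "Wi *v u \<noteq> 0"
      using inj_matrix_vector_mult[OF invWi] by (metis injD matrix_vector_mult_0_right)
    then have "(Wi *v u) \<bullet> (S *v (Wi *v u)) > 0" using Spd by (simp add: pos_def_def)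
    then show "u \<bullet> (T *v u) > 0" unfolding T_def quadT[OF Wisym'] .
  qed
  obtain R where Rsym: "transpose R = R" and Rpd: "pos_def R" and RR: "R ** R = T"
    using mat_sqrt[OF Tsym Tpd] by blast
  define L where "L = W ** R"
  have invL: "invertible L" unfolding L_def by (intro invertible_mult invW pd_invertible Rpd)
  have "L ** transpose L = W ** (R ** R) ** W"
    by (simp add: L_def matrix_transpose_mul Rsym Wsym matrix_mul_assoc)
  also have "\<dots> = W ** T ** W" by (simp only: RR)
  also have "\<dots> = (W ** Wi) ** S ** (Wi ** W)" by (simp add: T_def matrix_mul_assoc)
  also have "\<dots> = S" by (simp add: WWi WiW)
  finally have LL: "L ** transpose L = S" .
  have quad: "(L *v u) \<bullet> (matrix_inv Sz *v (L *v u)) = u \<bullet> (T *v u)" for u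
  proof -
    have i1: "Wi *v (W *v y) = y" for y by (simp only: matrix_vector_mul_assoc WiW matrix_vector_mul_lid)
    have e1: "matrix_inv Sz *v (L *v u) = Wi *v (R *v u)"
      unfolding A L_def Wi_def[symmetric] by (simp only: matrix_vector_mul_assoc[symmetric] i1)
    have "(L *v u) \<bullet> (matrix_inv Sz *v (L *v u)) = (W *v (R *v u)) \<bullet> (Wi *v (R *v u))"
      unfolding e1 by (simp only: L_def matrix_vector_mul_assoc[symmetric])
    also have "\<dots> = (transpose Wi *v (W *v (R *v u))) \<bullet> (R *v u)" by (rule inner_mat_left)
    also have "\<dots> = (R *v u) \<bullet> (R *v u)" by (simp only: Wisym' i1)
    finally have h1: "(L *v u) \<bullet> (matrix_inv Sz *v (L *v u)) = (R *v u) \<bullet> (R *v u)" .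
    have "u \<bullet> (T *v u) = u \<bullet> (R *v (R *v u))"
      unfolding RR[symmetric] by (simp only: matrix_vector_mul_assoc)
    also have "\<dots> = (transpose R *v u) \<bullet> (R *v u)" by (rule inner_mat_left)
    also have "\<dots> = (R *v u) \<bullet> (R *v u)" by (simp only: Rsym)
    finally show ?thesis using h1 by simp
  qed
  have ind: "indicator {z. z \<bullet> (matrix_inv Sz *v z) > \<tau>} (L *v u) = (indicator {u. \<tau> < u \<bullet> (T *v u)} u :: ennreal)" for u
    using quad[of u] by (simp add: indicator_def)
  have "measure (gaussian_measure S) {z. z \<bullet> (matrix_inv Sz *v z) > \<tau>}
      = enn2real (emeasure (gaussian_measure S) {z. z \<bullet> (matrix_inv Sz *v z) > \<tau>})"
    by (simp add: measure_def)
  also have "\<dots> = enn2real (\<integral>\<^sup>+u. ennreal (phi u) * indicator {z. z \<bullet> (matrix_inv Sz *v z) > \<tau>} (L *v u) \<partial>lborel)"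
    by (subst gauss_repr[OF invL LL quad_sets]) (rule refl)
  also have "\<dots> = enn2real (\<integral>\<^sup>+u. ennreal (phi u) * indicator {u. \<tau> < u \<bullet> (T *v u)} u \<partial>lborel)"
    by (simp only: ind)
  finally show "measure (gaussian_measure S) {z. z \<bullet> (matrix_inv Sz *v z) > \<tau>}
     = enn2real (\<integral>\<^sup>+u. ennreal (phi u) * indicator {u. \<tau> < u \<bullet> ((matrix_inv W ** S ** matrix_inv W) *v u)} u \<partial>lborel)"
    by (simp only: T_def Wi_def)
  show "pos_def (matrix_inv W ** S ** matrix_inv W)" using Tpd by (simp only: T_def Wi_def)
qed



lemma S_props:
  fixes Sz :: "real^'m^'m" and M :: "real^'n^'m" and D :: "real^'n^'n"
  assumes Szsym: "transpose Sz = Sz" and Szpd: "pos_def Sz"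
    and Dsym: "transpose D = D" and Dpd: "pos_def D"
  shows "transpose (Sz + M ** D ** transpose M) = Sz + M ** D ** transpose M"
    and "pos_def (Sz + M ** D ** transpose M)"
proof -
  show "transpose (Sz + M ** D ** transpose M) = Sz + M ** D ** transpose M"
    by (simp add: transpose_add_mat Szsym matrix_transpose_mul Dsym matrix_mul_assoc)
  show "pos_def (Sz + M ** D ** transpose M)"
    unfolding pos_def_def
  proof (intro allI impI)
    fix x :: "real^'m" assume x0: "x \<noteq> 0"
    have "x \<bullet> ((M ** D ** transpose M) *v x) \<ge> 0"
    proof (cases "transpose M *v x = 0")
      case True then show ?thesis by (simp only: quadP) simp
    next
      case False then show ?thesis using Dpd unfolding quadP pos_def_def by (simp add: less_imp_le)
    qed
    moreover have "x \<bullet> (Sz *v x) > 0" using Szpd x0 by (simp add: pos_def_def)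
    ultimately show "x \<bullet> ((Sz + M ** D ** transpose M) *v x) > 0"
      by (simp add: matrix_vector_mult_add_rdistrib inner_add_right)
  qed
qed

theorem corollary1:
  fixes \<tau> :: real
    and Sz :: "real^'m^'m"
    and M :: "real^'n^'m"
    and blk :: "'n \<Rightarrow> 'k"
    and Da Db :: "real^'n^'n"
  assumes tau_pos: "\<tau> > 0"
    and Sz_sym: "symmetric_mat Sz"
    and Sz_pd: "pos_def Sz"
    and M_rank: "rank M = CARD('m)"
    and Da_bd: "block_diag blk Da"
    and Db_bd: "block_diag blk Db"
    and Da_sym: "\<forall>j. block_symmetric blk j Da"
    and Db_sym: "\<forall>j. block_symmetric blk j Db"
    and ab: "\<forall>j. block_pos_def blk j (Da - Db)"
    and b_pd: "\<forall>j. block_pos_def blk j Db"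
    and comm_a: "(M ** Da ** transpose M) ** matrix_inv Sz = matrix_inv Sz ** (M ** Da ** transpose M)"
    and comm_b: "(M ** Db ** transpose M) ** matrix_inv Sz = matrix_inv Sz ** (M ** Db ** transpose M)"
  shows "false_alarm_unaware Sz (M ** Da ** transpose M) \<tau>
         > false_alarm_unaware Sz (M ** Db ** transpose M) \<tau>"
proof -
  have Szsym: "transpose Sz = Sz" using Sz_sym by (simp add: symmetric_mat_def)
  obtain W where Wsym: "transpose W = W" and Wpd: "pos_def W" and WW: "W ** W = Sz"
    using mat_sqrt[OF Szsym Sz_pd] by blast
  have invW: "invertible W" using pd_invertible[OF Wpd] .
  define Wi where "Wi = matrix_inv W"
  have WWi: "W ** Wi = mat 1" and WiW: "Wi ** W = mat 1"
    using matrix_inv_props[OF invW] by (auto simp: Wi_def)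
  have t1: "W ** transpose Wi = mat 1"
    using arg_cong[OF WiW, of transpose] by (simp add: matrix_transpose_mul Wsym transpose_mat)
  have t2: "transpose Wi ** W = mat 1"
    using arg_cong[OF WWi, of transpose] by (simp add: matrix_transpose_mul Wsym transpose_mat)
  have Wisym: "transpose (matrix_inv W) = matrix_inv W"
    using matrix_inv_unique[OF t1 t2] by (simp add: Wi_def)
  have a1: "Sz ** (Wi ** Wi) = mat 1"
  proof -
    have "Sz ** (Wi ** Wi) = W ** (W ** Wi) ** Wi" by (simp only: WW[symmetric] matrix_mul_assoc)
    then show ?thesis by (simp add: WWi)
  qed
  have a2: "(Wi ** Wi) ** Sz = mat 1"
  proof -
    have "(Wi ** Wi) ** Sz = Wi ** (Wi ** W) ** W" by (simp only: WW[symmetric] matrix_mul_assoc)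
    then show ?thesis by (simp add: WiW)
  qed
  have A: "matrix_inv Sz = matrix_inv W ** matrix_inv W"
    using matrix_inv_unique[OF a1 a2] by (simp add: Wi_def)
  have Dasym: "transpose Da = Da" using sym_of_blocks[OF Da_bd Da_sym] .
  have Dbsym: "transpose Db = Db" using sym_of_blocks[OF Db_bd Db_sym] .
  have Dbd: "block_diag blk (Da - Db)" using Da_bd Db_bd by (simp add: block_diag_def)
  have Dpd: "pos_def (Da - Db)" using block_pd[OF Dbd ab] .
  have Dbpd: "pos_def Db" using block_pd[OF Db_bd b_pd] .
  have Dapd: "pos_def Da"
    unfolding pos_def_def
  proof (intro allI impI)
    fix x :: "real^'n" assume "x \<noteq> 0"
    then have "x \<bullet> ((Da - Db) *v x) > 0" "x \<bullet> (Db *v x) > 0"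
      using Dpd Dbpd by (auto simp: pos_def_def)
    then show "x \<bullet> (Da *v x) > 0"
      by (simp add: matrix_vector_mult_diff_rdistrib inner_diff_right)
  qed
  have MTinj: "inj ((*v) (transpose M))"
    using M_rank by (simp add: full_rank_injective[symmetric] rank_transpose)
  define Sa where "Sa = Sz + M ** Da ** transpose M"
  define Sb where "Sb = Sz + M ** Db ** transpose M"
  note Sa = S_props[OF Szsym Sz_pd Dasym Dapd, of M, folded Sa_def]
  note Sb = S_props[OF Szsym Sz_pd Dbsym Dbpd, of M, folded Sb_def]
  note ra1 = fa_repr(1)[OF Wsym invW Wisym A Sa, of \<tau>]
  note rb1 = fa_repr(1)[OF Wsym invW Wisym A Sb, of \<tau>]
  note rb2 = fa_repr(2)[OF Wsym invW Wisym A Sb]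
  have Wisym': "transpose Wi = Wi" using Wisym by (simp add: Wi_def)
  have invWi: "invertible Wi" using WWi WiW invertible_def by blast
  have dif: "\<forall>u. u \<noteq> 0 \<longrightarrow> u \<bullet> ((matrix_inv W ** Sb ** matrix_inv W) *v u)
       < u \<bullet> ((matrix_inv W ** Sa ** matrix_inv W) *v u)"
  proof (intro allI impI)
    fix u :: "real^'m" assume "u \<noteq> 0"
    define y where "y = Wi *v u"
    have y0: "y \<noteq> 0" unfolding y_def
      using inj_matrix_vector_mult[OF invWi] \<open>u \<noteq> 0\<close> by (metis injD matrix_vector_mult_0_right)
    define z where "z = transpose M *v y"
    have z0: "z \<noteq> 0" unfolding z_def using MTinj y0 by (metis injD matrix_vector_mult_0_right)
    have "z \<bullet> ((Da - Db) *v z) > 0" using Dpd z0 by (simp add: pos_def_def)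
    then have zz: "z \<bullet> (Db *v z) < z \<bullet> (Da *v z)"
      by (simp add: matrix_vector_mult_diff_rdistrib inner_diff_right)
    have ea: "u \<bullet> ((matrix_inv W ** Sa ** matrix_inv W) *v u) = y \<bullet> (Sz *v y) + z \<bullet> (Da *v z)"
      unfolding Wi_def[symmetric] quadT[OF Wisym'] y_def[symmetric] Sa_def
        matrix_vector_mult_add_rdistrib inner_add_right quadP z_def ..
    have eb: "u \<bullet> ((matrix_inv W ** Sb ** matrix_inv W) *v u) = y \<bullet> (Sz *v y) + z \<bullet> (Db *v z)"
      unfolding Wi_def[symmetric] quadT[OF Wisym'] y_def[symmetric] Sb_def
        matrix_vector_mult_add_rdistrib inner_add_right quadP z_def ..
    show "u \<bullet> ((matrix_inv W ** Sb ** matrix_inv W) *v u) < u \<bullet> ((matrix_inv W ** Sa ** matrix_inv W) *v u)"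
      unfolding ea eb using zz by simp
  qed
  have "false_alarm_unaware Sz (M ** Db ** transpose M) \<tau>
      < false_alarm_unaware Sz (M ** Da ** transpose M) \<tau>"
    unfolding false_alarm_unaware_def Sa_def[symmetric] Sb_def[symmetric] ra1 rb1
    by (rule gauss_compare[OF tau_pos rb2 dif])
  then show ?thesis .
qed


end
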